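(* Let $G$ be a graph on $n$ vertices which is neither the empty (edgeless) graph nor the complete graph. Then \[\operatorname{scp}(G)+\operatorname{scp}(\overline{G})\ \ge\ 3n-3,\] and equality holds if and only if $G$ or $\overline{G}$ contains a clique of size $n-1$.
   Context: A clique partition of a graph $G$ is a family $\mathcal{C}$ of cliques (sets of pairwise adjacent vertices) of $G$ such that every edge of $G$ has both endpoints in exactly one member of $\mathcal{C}$. The sigma clique partition number $\operatorname{scp}(G)$ is the minimum of $\sum_{C\in\mathcal{C}}|C|$ over all clique partitions $\mathcal{C}$ of $G$. $\overline{G}$ denotes the complement of $G$. *)

theory Defs
  imports Main
begin

definition graph :: "'a set \<Rightarrow> 'a set set \<Rightarrow> bool" where
  "graph V E \<longleftrightarrow> finite V \<and> (\<forall>e\<in>E. e \<subseteq> V \<and> card e = 2)"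

definition all_pairs :: "'a set \<Rightarrow> 'a set set" where
  "all_pairs V = {e. e \<subseteq> V \<and> card e = 2}"

definition complement :: "'a set \<Rightarrow> 'a set set \<Rightarrow> 'a set set" where
  "complement V E = all_pairs V - E"

definition is_clique :: "'a set \<Rightarrow> 'a set set \<Rightarrow> 'a set \<Rightarrow> bool" where
  "is_clique V E C \<longleftrightarrow> C \<subseteq> V \<and> (\<forall>x\<in>C. \<forall>y\<in>C. x \<noteq> y \<longrightarrow> {x, y} \<in> E)"

definition clique_partition :: "'a set \<Rightarrow> 'a set set \<Rightarrow> 'a set set \<Rightarrow> bool" where
  "clique_partition V E \<C> \<longleftrightarrow> finite \<C> \<and> (\<forall>C\<in>\<C>. is_clique V E C) \<and>
     (\<forall>e\<in>E. \<exists>!C. C \<in> \<C> \<and> e \<subseteq> C)"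

definition scp :: "'a set \<Rightarrow> 'a set set \<Rightarrow> nat" where
  "scp V E = (LEAST s. \<exists>\<C>. clique_partition V E \<C> \<and> s = (\<Sum>C\<in>\<C>. card C))"

end

theory Submission
  imports Defs
begin

definition cnt :: "'a set set \<Rightarrow> 'a \<Rightarrow> nat" where
  "cnt P v = card {C\<in>P. v \<in> C}"

definition cost :: "'a set set \<Rightarrow> nat" where
  "cost P = (\<Sum>C\<in>P. card C)"

lemma edge_form:
  assumes "graph V E" "e \<in> E"
  shows "\<exists>x y. x \<noteq> y \<and> x \<in> V \<and> y \<in> V \<and> e = {x,y}"
proof -
  have "e \<subseteq> V" "card e = 2" using assms unfolding graph_def by auto
  then show ?thesis by (auto simp: card_2_iff)
qed

lemma card2_iff_ne: "card {x,y} = 2 \<longleftrightarrow> x \<noteq> y"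
  by (cases "x = y") auto

lemma graph_sub_all: "graph V E \<Longrightarrow> E \<subseteq> all_pairs V"
  unfolding graph_def all_pairs_def by blast

lemma compl_iff: "{x,y} \<in> complement V E \<longleftrightarrow> x\<in>V \<and> y\<in>V \<and> x\<noteq>y \<and> {x,y} \<notin> E"
  unfolding complement_def all_pairs_def by (simp add: card2_iff_ne)

lemma compl_compl: assumes "graph V E" shows "complement V (complement V E) = E"
  using graph_sub_all[OF assms] unfolding complement_def by blast

lemma graph_compl: assumes "graph V E" shows "graph V (complement V E)"
  using assms unfolding complement_def all_pairs_def graph_def by blast

lemma compl_empty: assumes "graph V E" shows "complement V E = {} \<longleftrightarrow> E = all_pairs V"
  using graph_sub_all[OF assms] unfolding complement_def by blast

lemma compl_all: assumes "graph V E" shows "complement V E = all_pairs V \<longleftrightarrow> E = {}"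
  using graph_sub_all[OF assms] unfolding complement_def by blast

lemma cp_fin: "clique_partition V E P \<Longrightarrow> finite P"
  unfolding clique_partition_def by auto
lemma cp_sub: "clique_partition V E P \<Longrightarrow> C \<in> P \<Longrightarrow> C \<subseteq> V"
  unfolding clique_partition_def is_clique_def by auto
lemma cp_edge: "clique_partition V E P \<Longrightarrow> C \<in> P \<Longrightarrow> x \<in> C \<Longrightarrow> y \<in> C \<Longrightarrow> x \<noteq> y \<Longrightarrow> {x,y} \<in> E"
  unfolding clique_partition_def is_clique_def by auto
lemma cp_cover: "clique_partition V E P \<Longrightarrow> e \<in> E \<Longrightarrow> \<exists>C\<in>P. e \<subseteq> C"
  unfolding clique_partition_def by blast
lemma cp_uniq: "clique_partition V E P \<Longrightarrow> e \<in> E \<Longrightarrow> C1 \<in> P \<Longrightarrow> C2 \<in> P \<Longrightarrow> e \<subseteq> C1 \<Longrightarrow> e \<subseteq> C2 \<Longrightarrow> C1 = C2"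
  unfolding clique_partition_def by blast

lemma cp_exists: assumes "graph V E" shows "clique_partition V E E"
proof -
  have fin: "finite E"
  proof -
    have "E \<subseteq> Pow V" using assms unfolding graph_def by auto
    moreover have "finite (Pow V)" using assms unfolding graph_def by auto
    ultimately show ?thesis by (rule finite_subset)
  qed
  have cl: "\<forall>C\<in>E. is_clique V E C"
  proof
    fix C assume "C \<in> E"
    then obtain x y where "x \<noteq> y" "x\<in>V" "y\<in>V" "C = {x,y}" using edge_form[OF assms] by blast
    then show "is_clique V E C" using \<open>C\<in>E\<close> unfolding is_clique_def by (auto simp: insert_commute)
  qed
  have un: "\<forall>e\<in>E. \<exists>!C. C \<in> E \<and> e \<subseteq> C"
  proof
    fix e assume e: "e \<in> E"
    show "\<exists>!C. C \<in> E \<and> e \<subseteq> C"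
    proof (rule ex1I[of _ e])
      show "e \<in> E \<and> e \<subseteq> e" using e by auto
      fix C assume "C \<in> E \<and> e \<subseteq> C"
      then show "C = e" using e assms unfolding graph_def
        by (metis card_subset_eq finite_subset)
    qed
  qed
  show ?thesis unfolding clique_partition_def using fin cl un by blast
qed

lemma scp_le: assumes "clique_partition V E P" shows "scp V E \<le> cost P"
  unfolding scp_def cost_def by (rule Least_le) (use assms in blast)

lemma scp_opt: assumes "graph V E" shows "\<exists>P. clique_partition V E P \<and> scp V E = cost P"
proof -
  have "\<exists>s. \<exists>P. clique_partition V E P \<and> s = (\<Sum>C\<in>P. card C)"
    using cp_exists[OF assms] by blast
  from LeastI_ex[OF this] show ?thesis unfolding scp_def cost_def by metis
qed

lemma card_filter_sum: "finite S \<Longrightarrow> card {x\<in>S. p x} = (\<Sum>x\<in>S. if p x then 1 else 0)"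
  by (simp add: sum.inter_filter[symmetric])

lemma double_count:
  assumes "finite V" "finite P" "\<forall>C\<in>P. C \<subseteq> V"
  shows "cost P = (\<Sum>v\<in>V. cnt P v)"
proof -
  have "cost P = (\<Sum>C\<in>P. \<Sum>v\<in>V. if v \<in> C then 1 else 0)"
    unfolding cost_def
  proof (rule sum.cong[OF refl])
    fix C assume "C \<in> P"
    then have "C = {v\<in>V. v \<in> C}" using assms by auto
    then show "card C = (\<Sum>v\<in>V. if v \<in> C then 1 else 0)"
      using card_filter_sum[OF assms(1), of "\<lambda>v. v \<in> C"] by simp
  qed
  also have "\<dots> = (\<Sum>v\<in>V. \<Sum>C\<in>P. if v \<in> C then 1 else 0)" by (rule sum.swap)
  also have "\<dots> = (\<Sum>v\<in>V. cnt P v)"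
    unfolding cnt_def using card_filter_sum[OF assms(2)] by simp
  finally show ?thesis .
qed


lemma cnt_pos: assumes "clique_partition V H R" "C \<in> R" "v \<in> C" shows "cnt R v \<ge> 1"
proof -
  have "finite {C\<in>R. v \<in> C}" using cp_fin[OF assms(1)] by simp
  moreover have "C \<in> {C\<in>R. v \<in> C}" using assms by simp
  ultimately show ?thesis unfolding cnt_def by (metis One_nat_def Suc_leI card_gt_0_iff empty_iff)
qed

lemma iso_of_cnt0: assumes "clique_partition V H R" "cnt R v = 0" shows "{v,u} \<notin> H"
proof
  assume "{v,u} \<in> H"
  then obtain C where "C \<in> R" "{v,u} \<subseteq> C" using cp_cover[OF assms(1)] by blast
  then have "cnt R v \<ge> 1" using cnt_pos[OF assms(1)] by blast
  then show False using assms(2) by simp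
qed

lemma cnt_le1_eq: assumes "clique_partition V H R" "cnt R v \<le> 1" "C1 \<in> R" "C2 \<in> R" "v \<in> C1" "v \<in> C2"
  shows "C1 = C2"
proof -
  have "finite {C\<in>R. v \<in> C}" using cp_fin[OF assms(1)] by simp
  then show ?thesis using assms(2-) unfolding cnt_def by (auto simp: card_le_Suc0_iff_eq)
qed

lemma cnt_le2_eq: assumes "clique_partition V H R" "cnt R v \<le> 2" "C \<in> R" "C1 \<in> R" "C2 \<in> R"
  "v \<in> C" "v \<in> C1" "v \<in> C2" "C1 \<noteq> C" "C2 \<noteq> C"
  shows "C1 = C2"
proof (rule ccontr)
  assume ne: "C1 \<noteq> C2"
  have f: "finite {C\<in>R. v \<in> C}" using cp_fin[OF assms(1)] by simp
  have "{C, C1, C2} \<subseteq> {C\<in>R. v \<in> C}" using assms by auto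
  then have "card {C, C1, C2} \<le> card {C\<in>R. v \<in> C}" using f card_mono by blast
  moreover have "card {C, C1, C2} = 3" using ne assms(9,10) by auto
  ultimately show False using assms(2) unfolding cnt_def by simp
qed

lemma other_vertex: assumes "graph V H" "H \<noteq> {}" "v \<in> V" shows "\<exists>u\<in>V. u \<noteq> v"
proof -
  obtain e where "e \<in> H" using assms(2) by blast
  then obtain x y where "x \<noteq> y" "x \<in> V" "y \<in> V" using edge_form[OF assms(1)] by blast
  then show ?thesis by metis
qed

lemma iso_ge2:
  assumes g: "graph V H" and ne: "H \<noteq> {}" and R': "clique_partition V (complement V H) R'"
    and v: "v \<in> V" and iso: "\<forall>u. {v,u} \<notin> H"
  shows "cnt R' v \<ge> 2"
proof (rule ccontr)
  assume "\<not> cnt R' v \<ge> 2"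
  then have le: "cnt R' v \<le> 1" by simp
  obtain u where u: "u \<in> V" "u \<noteq> v" using other_vertex[OF g ne v] by blast
  have "{v,u} \<in> complement V H" using u v iso compl_iff by fastforce
  then obtain C0 where C0: "C0 \<in> R'" "{v,u} \<subseteq> C0" using cp_cover[OF R'] by blast
  have inC0: "x \<in> C0" if "x \<in> V" for x
  proof (cases "x = v")
    case True then show ?thesis using C0 by simp
  next
    case False
    then have "{v,x} \<in> complement V H" using that v iso compl_iff by fastforce
    then obtain C where "C \<in> R'" "{v,x} \<subseteq> C" using cp_cover[OF R'] by blast
    then have "C = C0" using cnt_le1_eq[OF R' le] C0 by auto
    then show ?thesis using \<open>{v,x} \<subseteq> C\<close> by auto
  qed
  obtain e where "e \<in> H" using ne by blast
  then obtain x y where xy: "x \<noteq> y" "x \<in> V" "y \<in> V" "e = {x,y}" using edge_form[OF g] by blast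
  then have "{x,y} \<in> complement V H" using cp_edge[OF R' C0(1)] inC0 by blast
  then show False using \<open>e \<in> H\<close> xy(4) by (simp add: compl_iff)
qed

lemma mid_clique:
  assumes g: "graph V H" and na: "H \<noteq> all_pairs V"
    and R: "clique_partition V H R" and R': "clique_partition V (complement V H) R'"
    and uv: "u \<in> V" "v \<in> V" "u \<noteq> v" "{u,v} \<in> H"
    and cu: "cnt R u \<le> 1" "cnt R' u \<le> 1" and cv: "cnt R v \<le> 1" "cnt R' v \<le> 1"
  shows "\<exists>C. is_clique V H C \<and> card C = card V - 1"
proof -
  obtain K where K: "K \<in> R" "{u,v} \<subseteq> K" using cp_cover[OF R uv(4)] by blast
  have fV: "finite V" using g unfolding graph_def by simp
  have KV: "K \<subseteq> V" using cp_sub[OF R K(1)] .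
  have out: "{w,x} \<in> complement V H" if "x \<in> V - K" "w \<in> {u,v}" for x w
  proof -
    have "{w,x} \<notin> H"
    proof
      assume "{w,x} \<in> H"
      then obtain C where "C \<in> R" "{w,x} \<subseteq> C" using cp_cover[OF R] by blast
      moreover have "w \<in> K" using K that by auto
      moreover have "cnt R w \<le> 1" using that cu cv by auto
      ultimately have "C = K" using cnt_le1_eq[OF R _ _ K(1)] by simp
      then show False using that \<open>{w,x} \<subseteq> C\<close> by auto
    qed
    moreover have "w \<in> V" "w \<noteq> x" using that uv K by auto
    ultimately show ?thesis using that by (simp add: compl_iff)
  qed
  have le1: "card (V - K) \<le> 1"
  proof (rule ccontr)
    assume "\<not> card (V - K) \<le> 1"
    then obtain x y where xy: "x \<in> V - K" "y \<in> V - K" "x \<noteq> y"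
      by (metis card_le_Suc0_iff_eq fV finite_Diff One_nat_def)
    have D: "\<exists>D\<in>R'. {w,x,y} \<subseteq> D" if w: "w \<in> {u,v}" for w
    proof -
      obtain D1 where D1: "D1 \<in> R'" "{w,x} \<subseteq> D1" using cp_cover[OF R' out[OF xy(1) w]] by blast
      obtain D2 where D2: "D2 \<in> R'" "{w,y} \<subseteq> D2" using cp_cover[OF R' out[OF xy(2) w]] by blast
      have "cnt R' w \<le> 1" using w cu cv by auto
      then have "D1 = D2" using cnt_le1_eq[OF R'] D1 D2 by auto
      then show ?thesis using D1 D2 by auto
    qed
    obtain Du where Du: "Du \<in> R'" "{u,x,y} \<subseteq> Du" using D by blast
    obtain Dv where Dv: "Dv \<in> R'" "{v,x,y} \<subseteq> Dv" using D by blast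
    have "{x,y} \<in> complement V H" using cp_edge[OF R' Du(1)] Du xy by auto
    then have "Du = Dv" using cp_uniq[OF R'] Du Dv by (meson insert_subset)
    then have "{u,v} \<in> complement V H" using cp_edge[OF R' Du(1)] Du Dv uv by auto
    then show False using uv by (simp add: compl_iff)
  qed
  have ne: "V - K \<noteq> {}"
  proof
    assume "V - K = {}"
    then have VK: "V = K" using KV by auto
    have "all_pairs V \<subseteq> H"
    proof
      fix e assume "e \<in> all_pairs V"
      then have "e \<subseteq> V" "card e = 2" unfolding all_pairs_def by auto
      then obtain x y where "x \<noteq> y" "e = {x,y}" by (auto simp: card_2_iff)
      then show "e \<in> H" using cp_edge[OF R K(1)] VK \<open>e \<subseteq> V\<close> by auto
    qed
    then show False using na graph_sub_all[OF g] by blast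
  qed
  have "card (V - K) = 1" using le1 ne fV
    by (metis One_nat_def card_0_eq finite_Diff le_antisym less_one not_le)
  then have "card K = card V - 1" using card_Diff_subset[OF finite_subset[OF KV fV] KV] by simp
  moreover have "is_clique V H K" using R K(1) unfolding clique_partition_def by blast
  ultimately show ?thesis by blast
qed


lemma iso2_clique:
  assumes g: "graph V H" and ne: "H \<noteq> {}"
    and R': "clique_partition V (complement V H) R'"
    and uv: "u \<in> V" "v \<in> V" "u \<noteq> v"
    and isou: "\<forall>x. {u,x} \<notin> H" and isov: "\<forall>x. {v,x} \<notin> H"
    and cu: "cnt R' u \<le> 2" and cv: "cnt R' v \<le> 2"
  shows "\<exists>C. is_clique V (complement V H) C \<and> card C = card V - 1"
proof -
  have fV: "finite V" using g unfolding graph_def by simp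
  have uvc: "{u,v} \<in> complement V H" using uv isou by (simp add: compl_iff)
  obtain C where C: "C \<in> R'" "{u,v} \<subseteq> C" using cp_cover[OF R' uvc] by blast
  have CV: "C \<subseteq> V" using cp_sub[OF R' C(1)] .
  have Y: "\<exists>Y\<in>R'. Y \<noteq> C \<and> {w,x,y} \<subseteq> Y"
    if w: "w \<in> {u,v}" and xy: "x \<in> V - C" "y \<in> V - C" for w x y
  proof -
    have isow: "\<forall>z. {w,z} \<notin> H" using w isou isov by auto
    have cw: "cnt R' w \<le> 2" using w cu cv by auto
    have wC: "w \<in> C" "w \<in> V" using w C uv by auto
    have ex: "{w,z} \<in> complement V H" if "z \<in> V - C" for z
      using that wC isow by (auto simp: compl_iff)
    obtain D1 where D1: "D1 \<in> R'" "{w,x} \<subseteq> D1" using cp_cover[OF R' ex[OF xy(1)]] by blast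
    obtain D2 where D2: "D2 \<in> R'" "{w,y} \<subseteq> D2" using cp_cover[OF R' ex[OF xy(2)]] by blast
    have "D1 \<noteq> C" "D2 \<noteq> C" using D1 D2 xy by auto
    then have "D1 = D2" using cnt_le2_eq[OF R' cw C(1) D1(1) D2(1)] wC D1 D2 by auto
    then show ?thesis using D1 D2 \<open>D1 \<noteq> C\<close> by auto
  qed
  have le1: "card (V - C) \<le> 1"
  proof (rule ccontr)
    assume "\<not> card (V - C) \<le> 1"
    then obtain x y where xy: "x \<in> V - C" "y \<in> V - C" "x \<noteq> y"
      by (metis card_le_Suc0_iff_eq fV finite_Diff One_nat_def)
    obtain Yu where Yu: "Yu \<in> R'" "Yu \<noteq> C" "{u,x,y} \<subseteq> Yu" using Y[of u x y] xy by blast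
    obtain Yv where Yv: "Yv \<in> R'" "Yv \<noteq> C" "{v,x,y} \<subseteq> Yv" using Y[of v x y] xy by blast
    have "{x,y} \<in> complement V H" using cp_edge[OF R' Yu(1)] Yu xy by auto
    then have "Yu = Yv" using cp_uniq[OF R'] Yu Yv by (meson insert_subset)
    then have "Yu = C" using cp_uniq[OF R' uvc Yu(1) C(1)] Yu Yv C by auto
    then show False using Yu by simp
  qed
  have nonempty: "V - C \<noteq> {}"
  proof
    assume "V - C = {}"
    then have VC: "V \<subseteq> C" by auto
    obtain e where "e \<in> H" using ne by blast
    then obtain x y where xy: "x \<noteq> y" "x \<in> V" "y \<in> V" "e = {x,y}" using edge_form[OF g] by blast
    then have "{x,y} \<in> complement V H" using cp_edge[OF R' C(1)] VC by blast
    then show False using \<open>e \<in> H\<close> xy(4) by (simp add: compl_iff)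
  qed
  have "card (V - C) = 1" using le1 nonempty fV
    by (metis One_nat_def card_0_eq finite_Diff le_antisym less_one not_le)
  then have "card C = card V - 1" using card_Diff_subset[OF finite_subset[OF CV fV] CV] by simp
  moreover have "is_clique V (complement V H) C" using R' C(1) unfolding clique_partition_def by blast
  ultimately show ?thesis by blast
qed

lemma three_elems: assumes "finite T" "\<not> card T \<le> 2"
  shows "\<exists>a b c. a \<in> T \<and> b \<in> T \<and> c \<in> T \<and> a \<noteq> b \<and> a \<noteq> c \<and> b \<noteq> c"
proof -
  obtain a where a: "a \<in> T" using assms by fastforce
  have "\<not> card (T - {a}) \<le> 1" using assms a by (simp add: card_Diff_singleton)
  then obtain b c where "b \<in> T - {a}" "c \<in> T - {a}" "b \<noteq> c"
    by (metis card_le_Suc0_iff_eq assms(1) finite_Diff One_nat_def)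
  then show ?thesis using a by blast
qed

lemma low_bound:
  assumes g: "graph V H" and ne: "H \<noteq> {}" and na: "H \<noteq> all_pairs V"
    and R: "clique_partition V H R" and R': "clique_partition V (complement V H) R'"
    and nc1: "\<not> (\<exists>C. is_clique V H C \<and> card C = card V - 1)"
    and nc2: "\<not> (\<exists>C. is_clique V (complement V H) C \<and> card C = card V - 1)"
  shows "(\<Sum>v\<in>V. cnt R v + cnt R' v) \<ge> 3 * card V - 2"
proof -
  have fV: "finite V" using g unfolding graph_def by simp
  have gc: "graph V (complement V H)" using graph_compl[OF g] .
  have cc: "complement V (complement V H) = H" using compl_compl[OF g] .
  have nec: "complement V H \<noteq> {}" using compl_empty[OF g] na by simp
  have nac: "complement V H \<noteq> all_pairs V" using compl_all[OF g] ne by simp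
  have Rc: "clique_partition V (complement V (complement V H)) R" using R cc by simp
  have iso1: "\<forall>u. {v,u} \<notin> H" if "cnt R v = 0" for v using iso_of_cnt0[OF R that] by blast
  have iso2: "\<forall>u. {v,u} \<notin> complement V H" if "cnt R' v = 0" for v using iso_of_cnt0[OF R' that] by blast
  have s2: "cnt R v + cnt R' v \<ge> 2" if v: "v \<in> V" for v
  proof -
    have a: "cnt R v = 0 \<Longrightarrow> cnt R' v \<ge> 2" using iso_ge2[OF g ne R' v] iso1 by blast
    have b: "cnt R' v = 0 \<Longrightarrow> cnt R v \<ge> 2" using iso_ge2[OF gc nec Rc v] iso2 by blast
    show ?thesis using a b by linarith
  qed
  define T where "T = {v\<in>V. cnt R v + cnt R' v \<le> 2}"
  have fT: "finite T" using fV unfolding T_def by simp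
  have kinds: "(cnt R v \<le> 1 \<and> cnt R' v \<le> 1) \<or> (cnt R v = 0 \<and> cnt R' v \<le> 2) \<or> (cnt R' v = 0 \<and> cnt R v \<le> 2)"
    if "v \<in> T" for v using that unfolding T_def by auto
  have mm: "False" if "x \<in> V" "y \<in> V" "x \<noteq> y" "cnt R x \<le> 1" "cnt R' x \<le> 1" "cnt R y \<le> 1" "cnt R' y \<le> 1" for x y
  proof (cases "{x,y} \<in> H")
    case True
    then show False using mid_clique[OF g na R R' that(1-3) True that(4-7)] nc1 by blast
  next
    case False
    then have "{x,y} \<in> complement V H" using that by (simp add: compl_iff)
    then show False using mid_clique[OF gc nac R' Rc that(1-3) _ that(5) _ that(7)] that(4,6) nc2 by blast
  qed
  have ii: "False" if "x \<in> V" "y \<in> V" "x \<noteq> y" "cnt R x = 0" "cnt R' x \<le> 2" "cnt R y = 0" "cnt R' y \<le> 2" for x y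
    using iso2_clique[OF g ne R' that(1-3)] iso1 that nc2 by blast
  have uu: "False" if "x \<in> V" "y \<in> V" "x \<noteq> y" "cnt R' x = 0" "cnt R x \<le> 2" "cnt R' y = 0" "cnt R y \<le> 2" for x y
    using iso2_clique[OF gc nec Rc that(1-3)] iso2 that nc1 cc by metis
  have iu: "False" if "x \<in> V" "y \<in> V" "x \<noteq> y" "cnt R x = 0" "cnt R' y = 0" for x y
  proof -
    have "{x,y} \<notin> H" using iso1 that by blast
    moreover have "{y,x} \<notin> complement V H" using iso2 that by blast
    ultimately show False using that by (simp add: compl_iff insert_commute)
  qed
  define mid where "mid v \<longleftrightarrow> cnt R v \<le> 1 \<and> cnt R' v \<le> 1" for v
  define iso where "iso v \<longleftrightarrow> cnt R v = 0 \<and> cnt R' v \<le> 2" for v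
  define uni where "uni v \<longleftrightarrow> cnt R' v = 0 \<and> cnt R v \<le> 2" for v
  have K: "mid v \<or> iso v \<or> uni v" if "v \<in> T" for v using kinds[OF that] unfolding mid_def iso_def uni_def by blast
  have TV: "v \<in> V" if "v \<in> T" for v using that unfolding T_def by auto
  have P1: "\<not> (mid x \<and> mid y)" if "x \<in> T" "y \<in> T" "x \<noteq> y" for x y
    using mm[OF TV[OF that(1)] TV[OF that(2)] that(3)] unfolding mid_def by blast
  have P2: "\<not> (iso x \<and> iso y)" if "x \<in> T" "y \<in> T" "x \<noteq> y" for x y
    using ii[OF TV[OF that(1)] TV[OF that(2)] that(3)] unfolding iso_def by blast
  have P3: "\<not> (uni x \<and> uni y)" if "x \<in> T" "y \<in> T" "x \<noteq> y" for x y
    using uu[OF TV[OF that(1)] TV[OF that(2)] that(3)] unfolding uni_def by blast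
  have P4: "\<not> (iso x \<and> uni y)" if "x \<in> T" "y \<in> T" "x \<noteq> y" for x y
    using iu[OF TV[OF that(1)] TV[OF that(2)] that(3)] unfolding iso_def uni_def by blast
  have cT: "card T \<le> 2"
  proof (rule ccontr)
    assume "\<not> card T \<le> 2"
    then obtain a b c where abc: "a \<in> T" "b \<in> T" "c \<in> T" "a \<noteq> b" "a \<noteq> c" "b \<noteq> c"
      using three_elems[OF fT] by blast
    have "mid a \<or> iso a \<or> uni a" "mid b \<or> iso b \<or> uni b" "mid c \<or> iso c \<or> uni c" using K abc by auto
    moreover note P1[OF abc(1,2,4)] P1[OF abc(1,3,5)] P1[OF abc(2,3,6)]
      P2[OF abc(1,2,4)] P2[OF abc(1,3,5)] P2[OF abc(2,3,6)]
      P3[OF abc(1,2,4)] P3[OF abc(1,3,5)] P3[OF abc(2,3,6)]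
      P4[OF abc(1,2,4)] P4[OF abc(1,3,5)] P4[OF abc(2,3,6)]
      P4[OF abc(2,1) abc(4)[symmetric]] P4[OF abc(3,1) abc(5)[symmetric]] P4[OF abc(3,2) abc(6)[symmetric]]
    ultimately show False by blast
  qed
  have pw: "cnt R v + cnt R' v + (if v \<in> T then 1 else 0) \<ge> 3" if "v \<in> V" for v
    using s2[OF that] that unfolding T_def by auto
  have "3 * card V = (\<Sum>v\<in>V. 3::nat)" by simp
  also have "\<dots> \<le> (\<Sum>v\<in>V. cnt R v + cnt R' v + (if v \<in> T then 1 else 0))"
    by (rule sum_mono) (use pw in auto)
  also have "\<dots> = (\<Sum>v\<in>V. cnt R v + cnt R' v) + card T"
  proof -
    have "card T = (\<Sum>v\<in>V. if v \<in> T then 1 else 0)"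
      unfolding T_def using card_filter_sum[OF fV, of "\<lambda>v. cnt R v + cnt R' v \<le> 2"] by simp
    then show ?thesis by (simp add: sum.distrib)
  qed
  finally show ?thesis using cT by linarith
qed


locale conf =
  fixes V :: "'a set" and H :: "'a set set" and K :: "'a set" and w :: 'a and A B :: "'a set"
  assumes g: "graph V H" and ne: "H \<noteq> {}" and na: "H \<noteq> all_pairs V"
    and Kcl: "is_clique V H K" and VK: "V = insert w K" and wK: "w \<notin> K"
    and A_def: "A = {x\<in>K. {w,x} \<in> H}" and B_def: "B = K - A"
begin

lemma fV: "finite V" using g unfolding graph_def by simp
lemma fK: "finite K" using fV VK by simp
lemma fA: "finite A" using fK A_def by simp
lemma fB: "finite B" using fK B_def by simp
lemma KAB: "K = A \<union> B" "A \<inter> B = {}" using A_def B_def by auto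
lemma wA: "w \<notin> A" "w \<notin> B" using wK KAB by auto

lemma Kedge: "x \<in> K \<Longrightarrow> y \<in> K \<Longrightarrow> x \<noteq> y \<Longrightarrow> {x,y} \<in> H"
  using Kcl unfolding is_clique_def by blast

lemma Aedge: "x \<in> A \<Longrightarrow> {w,x} \<in> H" using A_def by simp
lemma Bnedge: "y \<in> B \<Longrightarrow> {w,y} \<notin> H" using A_def B_def by simp

lemma H_cases:
  assumes "e \<in> H"
  obtains x y where "x \<in> K" "y \<in> K" "x \<noteq> y" "e = {x,y}" | x where "x \<in> A" "e = {w,x}"
proof -
  obtain x y where xy: "x \<noteq> y" "x \<in> V" "y \<in> V" "e = {x,y}" using edge_form[OF g assms] by blast
  show ?thesis
  proof (cases "x = w")
    case True
    then have "y \<in> K" "{w,y} \<in> H" using xy assms VK by auto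
    then have "y \<in> A" using A_def by simp
    then show ?thesis using that(2) True xy by blast
  next
    case xw: False
    show ?thesis
    proof (cases "y = w")
      case True
      then have "x \<in> K" "{w,x} \<in> H" using xy assms VK by (auto simp: insert_commute)
      then have "x \<in> A" using A_def by simp
      then show ?thesis using that(2) True xy by (metis insert_commute)
    next
      case False
      then show ?thesis using that(1) xw xy VK by blast
    qed
  qed
qed

lemma C_cases:
  assumes "e \<in> complement V H"
  obtains y where "y \<in> B" "e = {w,y}"
proof -
  have "e \<in> all_pairs V" "e \<notin> H" using assms unfolding complement_def by auto
  then obtain x y where xy: "x \<noteq> y" "x \<in> V" "y \<in> V" "e = {x,y}"
    unfolding all_pairs_def by (auto simp: card_2_iff)
  show ?thesis
  proof (cases "x = w")
    case True
    then have "y \<in> B" using xy \<open>e \<notin> H\<close> VK A_def B_def by auto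
    then show ?thesis using that True xy by blast
  next
    case xw: False
    show ?thesis
    proof (cases "y = w")
      case True
      then have "x \<in> B" using xy \<open>e \<notin> H\<close> VK A_def B_def by (auto simp: insert_commute)
      then show ?thesis using that True xy by (metis insert_commute)
    next
      case False
      then show ?thesis using xw xy VK Kedge \<open>e \<notin> H\<close> by auto
    qed
  qed
qed

lemma B_ne: "B \<noteq> {}"
proof -
  have "all_pairs V \<noteq> {}"
  proof -
    obtain e where "e \<in> H" using ne by blast
    then show ?thesis using graph_sub_all[OF g] by blast
  qed
  have "complement V H \<noteq> {}" using compl_empty[OF g] na by simp
  then obtain e where "e \<in> complement V H" by blast
  then show ?thesis using C_cases by blast
qed

lemma K2: "card K \<ge> 2"
proof (rule ccontr)
  assume "\<not> card K \<ge> 2"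
  then have cV: "card V \<le> 2" using VK wK fK by simp
  obtain e where e: "e \<in> H" using ne by blast
  have "complement V H \<noteq> {}" using compl_empty[OF g] na by simp
  then obtain e' where e': "e' \<in> complement V H" by blast
  have s: "e \<subseteq> V" "card e = 2" "e' \<subseteq> V" "card e' = 2"
    using e e' g unfolding graph_def complement_def all_pairs_def by auto
  then have "e = V" "e' = V" using cV fV by (metis card_mono card_subset_eq le_antisym)+
  then show False using e e' unfolding complement_def by auto
qed

lemma K_other: "y \<in> K \<Longrightarrow> \<exists>z\<in>K. z \<noteq> y"
  using K2 by (metis card_le_Suc0_iff_eq fK not_less_eq_eq numeral_2_eq_2 One_nat_def)

lemma inj_pair: "inj_on (\<lambda>x. {w,x}) S" if "w \<notin> S" for S
  using that unfolding inj_on_def by (auto simp: doubleton_eq_iff)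

lemma sum_pairs: "w \<notin> S \<Longrightarrow> finite S \<Longrightarrow> (\<Sum>C\<in>(\<lambda>x. {w,x}) ` S. card C) = 2 * card S"
  apply (subst sum.reindex[OF inj_pair], assumption)
  apply simp
  apply (subst sum.cong[where B=S and h="\<lambda>_. 2"])
    apply (auto simp: card2_iff_ne)
  done

end

context conf begin

lemma P0_part: "clique_partition V H (insert K ((\<lambda>x. {w,x}) ` A))"
proof -
  let ?P = "insert K ((\<lambda>x. {w,x}) ` A)"
  have fin: "finite ?P" using fA by simp
  have cl: "\<forall>C\<in>?P. is_clique V H C"
  proof
    fix C assume "C \<in> ?P"
    then show "is_clique V H C"
    proof
      assume "C = K" then show ?thesis using Kcl by simp
    next
      assume "C \<in> (\<lambda>x. {w,x}) ` A"
      then obtain x where x: "x \<in> A" "C = {x,w}" by (auto simp: insert_commute)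
      have "{w,x} \<in> H" using Aedge x by simp
      moreover have "x \<in> V" "w \<in> V" using x VK KAB by auto
      ultimately show ?thesis using x unfolding is_clique_def by (auto simp: insert_commute)
    qed
  qed
  have un: "\<forall>e\<in>H. \<exists>!C. C \<in> ?P \<and> e \<subseteq> C"
  proof
    fix e assume e: "e \<in> H"
    then show "\<exists>!C. C \<in> ?P \<and> e \<subseteq> C"
    proof (cases rule: H_cases)
      case (1 x y)
      show ?thesis
      proof (rule ex1I[of _ K])
        show "K \<in> ?P \<and> e \<subseteq> K" using 1 by auto
        fix C assume C: "C \<in> ?P \<and> e \<subseteq> C"
        show "C = K"
        proof (rule ccontr)
          assume "C \<noteq> K"
          then obtain z where "C = {w,z}" using C by auto
          then show False using C 1 wK by auto
        qed
      qed
    next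
      case (2 x)
      show ?thesis
      proof (rule ex1I[of _ "{w,x}"])
        show "{w,x} \<in> ?P \<and> e \<subseteq> {w,x}" using 2 by auto
        fix C assume C: "C \<in> ?P \<and> e \<subseteq> C"
        have xw: "x \<noteq> w" using 2 wA by auto
        show "C = {w,x}"
        proof (cases "C = K")
          case True then show ?thesis using C 2 wK by auto
        next
          case False
          then obtain z where "C = {w,z}" using C by auto
          then show ?thesis using C 2 xw by auto
        qed
      qed
    qed
  qed
  show ?thesis unfolding clique_partition_def using fin cl un by blast
qed

lemma P0_cost: "cost (insert K ((\<lambda>x. {w,x}) ` A)) = card K + 2 * card A"
proof -
  have "K \<notin> (\<lambda>x. {w,x}) ` A" using wK by auto
  then show ?thesis unfolding cost_def using sum_pairs[OF wA(1) fA] fA by simp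
qed

lemma Q0_part: "clique_partition V (complement V H) ((\<lambda>y. {w,y}) ` B)"
proof -
  let ?Q = "(\<lambda>y. {w,y}) ` B"
  have fin: "finite ?Q" using fB by simp
  have cl: "\<forall>C\<in>?Q. is_clique V (complement V H) C"
  proof
    fix C assume "C \<in> ?Q"
    then obtain y where y: "y \<in> B" "C = {w,y}" by auto
    have yw: "y \<noteq> w" using y wA by auto
    have V: "y \<in> V" "w \<in> V" using y VK KAB by auto
    have "{w,y} \<in> complement V H" using Bnedge[OF y(1)] yw V by (simp add: compl_iff)
    then show "is_clique V (complement V H) C" using y V unfolding is_clique_def
      by (auto simp: insert_commute)
  qed
  have un: "\<forall>e\<in>complement V H. \<exists>!C. C \<in> ?Q \<and> e \<subseteq> C"
  proof
    fix e assume e: "e \<in> complement V H"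
    then obtain y where y: "y \<in> B" "e = {w,y}" using C_cases by blast
    have yw: "y \<noteq> w" using y wA by auto
    show "\<exists>!C. C \<in> ?Q \<and> e \<subseteq> C"
    proof (rule ex1I[of _ "{w,y}"])
      show "{w,y} \<in> ?Q \<and> e \<subseteq> {w,y}" using y by auto
      fix C assume C: "C \<in> ?Q \<and> e \<subseteq> C"
      then obtain z where "C = {w,z}" by auto
      then show "C = {w,y}" using C y yw by auto
    qed
  qed
  show ?thesis unfolding clique_partition_def using fin cl un by blast
qed

lemma Q0_cost: "cost ((\<lambda>y. {w,y}) ` B) = 2 * card B"
  unfolding cost_def using sum_pairs[OF wA(2) fB] .

lemma upper: "scp V H + scp V (complement V H) \<le> card K + 2 * card A + 2 * card B"
  using scp_le[OF P0_part] scp_le[OF Q0_part] P0_cost Q0_cost by linarith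

lemma lowerQ: assumes Q: "clique_partition V (complement V H) Q" shows "cost Q \<ge> 2 * card B"
proof -
  have sub: "(\<lambda>y. {w,y}) ` B \<subseteq> Q"
  proof
    fix C assume "C \<in> (\<lambda>y. {w,y}) ` B"
    then obtain y where y: "y \<in> B" "C = {w,y}" by auto
    have yw: "y \<noteq> w" using y wA by auto
    have V: "y \<in> V" "w \<in> V" using y VK KAB by auto
    have "{w,y} \<in> complement V H" using Bnedge[OF y(1)] yw V by (simp add: compl_iff)
    then obtain D where D: "D \<in> Q" "{w,y} \<subseteq> D" using cp_cover[OF Q] by blast
    have "D \<subseteq> {w,y}"
    proof
      fix z assume z: "z \<in> D"
      show "z \<in> {w,y}"
      proof (rule ccontr)
        assume nz: "z \<notin> {w,y}"
        then have "{y,z} \<in> complement V H" using cp_edge[OF Q D(1)] D z by auto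
        then obtain u where "u \<in> B" "{y,z} = {w,u}" using C_cases by blast
        then show False using nz yw by (auto simp: doubleton_eq_iff)
      qed
    qed
    then show "C \<in> Q" using D y by auto
  qed
  have "2 * card B = (\<Sum>C\<in>(\<lambda>y. {w,y}) ` B. card C)" using sum_pairs[OF wA(2) fB] by simp
  also have "\<dots> \<le> cost Q" unfolding cost_def
    by (rule sum_mono2[OF cp_fin[OF Q] sub]) simp
  finally show ?thesis .
qed

end

lemma cnt_ge_sub: assumes "finite P" "S \<subseteq> {C\<in>P. v \<in> C}" shows "card S \<le> cnt P v"
  unfolding cnt_def using assms by (simp add: card_mono)

lemma sum_ge: "(\<And>x. x \<in> S \<Longrightarrow> c \<le> f x) \<Longrightarrow> card S * c \<le> (\<Sum>x\<in>S. f x :: nat)"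
  using sum_bounded_below[of S c f] by simp

lemma arith_fin: "(M::nat) \<ge> 2 \<Longrightarrow> b \<ge> 1 \<Longrightarrow> 1 + 2*M + (M+1)*r + M*b \<ge> (M + r + b) + 2*(M+r)"
proof -
  assume a: "M \<ge> 2" "b \<ge> 1"
  have h1: "(M+1)*r = M*r + r" by simp
  have h2: "M*r \<ge> 2*r" using a by (simp add: mult_right_mono)
  have h3: "M*b + 1 \<ge> M + b"
  proof -
    obtain m c where "M = Suc m" "b = Suc c" using a by (metis Suc_le_D le_SucE not0_implies_Suc numeral_2_eq_2 One_nat_def le_zero_eq)
    then show ?thesis by (simp add: algebra_simps)
  qed
  have gen: "\<And>X Y. X \<ge> 2*r \<Longrightarrow> M + b \<le> Y + 1 \<Longrightarrow> M + r + b + 2*(M+r) \<le> 1 + 2*M + (X + r) + Y"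
    by arith
  show ?thesis using gen[OF h2 h3] h1 by simp
qed

context conf begin

lemma lowerP: assumes P: "clique_partition V H P" shows "cost P \<ge> card K + 2 * card A"
proof -
  have fP: "finite P" using cp_fin[OF P] .
  let ?c = "cnt P"
  have dc: "cost P = (\<Sum>v\<in>V. ?c v)" using double_count[OF fV fP] cp_sub[OF P] by blast
  have split: "(\<Sum>v\<in>V. ?c v) = ?c w + (\<Sum>v\<in>A. ?c v) + (\<Sum>v\<in>B. ?c v)"
    using VK wK fK KAB fA fB by (simp add: sum.union_disjoint)
  have Wsub: "C \<subseteq> insert w A" if "C \<in> P" "w \<in> C" for C
  proof
    fix z assume z: "z \<in> C"
    show "z \<in> insert w A"
    proof (cases "z = w")
      case False
      then have "z \<in> K" using cp_sub[OF P that(1)] z VK by auto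
      moreover have "{w,z} \<in> H" using cp_edge[OF P that(1) that(2) z] False by auto
      ultimately show ?thesis using A_def by simp
    qed simp
  qed
  obtain y0 where y0: "y0 \<in> B" using B_ne by blast
  have y0K: "y0 \<in> K" using y0 KAB by auto
  have Kpos: "?c y \<ge> 1" if yK: "y \<in> K" for y
  proof -
    obtain z where "z \<in> K" "z \<noteq> y" using K_other[OF yK] by blast
    then have "{y,z} \<in> H" using Kedge yK by blast
    then obtain C where "C \<in> P" "{y,z} \<subseteq> C" using cp_cover[OF P] by blast
    then show ?thesis using cnt_pos[OF P] by blast
  qed
  show ?thesis
  proof (cases "\<exists>D\<in>P. w \<in> D \<and> card (D \<inter> A) \<ge> 2")
    case True
    then obtain D where D: "D \<in> P" "w \<in> D" "card (D \<inter> A) \<ge> 2" by blast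
    define M where "M = card (D \<inter> A)"
    have yD: "y \<notin> D" if "y \<in> B" for y using Wsub[OF D(1,2)] that KAB wA by auto
    have key: "card {C\<in>P. z \<in> C \<and> w \<notin> C} \<ge> M" if z: "z \<in> K" "z \<notin> D" for z
    proof -
      define f where "f d = (SOME C. C \<in> P \<and> {z,d} \<subseteq> C)" for d
      have fd: "f d \<in> P \<and> {z,d} \<subseteq> f d" if d: "d \<in> D \<inter> A" for d
      proof -
        have "d \<in> K" "d \<noteq> z" using d z KAB by auto
        then have "{z,d} \<in> H" using Kedge z by blast
        then have "\<exists>C. C \<in> P \<and> {z,d} \<subseteq> C" using cp_cover[OF P] by blast
        then show ?thesis unfolding f_def by (rule someI_ex)
      qed
      have nw: "w \<notin> f d" if d: "d \<in> D \<inter> A" for d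
      proof
        assume "w \<in> f d"
        then have "{w,d} \<subseteq> f d" using fd[OF d] by auto
        moreover have "{w,d} \<subseteq> D" using d D by auto
        moreover have "{w,d} \<in> H" using d Aedge by auto
        ultimately have "f d = D" using cp_uniq[OF P] fd[OF d] D(1) by blast
        then show False using fd[OF d] z by auto
      qed
      have inj: "inj_on f (D \<inter> A)"
      proof (rule inj_onI)
        fix d d' assume d: "d \<in> D \<inter> A" and d': "d' \<in> D \<inter> A" and eq: "f d = f d'"
        show "d = d'"
        proof (rule ccontr)
          assume ne: "d \<noteq> d'"
          have "{d,d'} \<in> H" using Kedge d d' ne KAB by auto
          moreover have "{d,d'} \<subseteq> f d" using fd[OF d] fd[OF d'] eq by auto
          moreover have "{d,d'} \<subseteq> D" using d d' by auto
          ultimately have "f d = D" using cp_uniq[OF P] fd[OF d] D(1) by blast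
          then show False using fd[OF d] z by auto
        qed
      qed
      have "f ` (D \<inter> A) \<subseteq> {C\<in>P. z \<in> C \<and> w \<notin> C}" using fd nw by auto
      then have "card (f ` (D \<inter> A)) \<le> card {C\<in>P. z \<in> C \<and> w \<notin> C}" using fP by (simp add: card_mono)
      then show ?thesis using card_image[OF inj] M_def by simp
    qed
    have cB: "?c y \<ge> M" if "y \<in> B" for y
    proof -
      have "card {C\<in>P. y \<in> C \<and> w \<notin> C} \<le> ?c y" by (rule cnt_ge_sub[OF fP]) auto
      then show ?thesis using key[of y] that yD KAB by auto
    qed
    have cR: "?c z \<ge> M + 1" if z: "z \<in> A - D" for z
    proof -
      have "{w,z} \<in> H" using z Aedge by auto
      then obtain Cw where Cw: "Cw \<in> P" "{w,z} \<subseteq> Cw" using cp_cover[OF P] by blast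
      let ?S = "{C\<in>P. z \<in> C \<and> w \<notin> C}"
      have "insert Cw ?S \<subseteq> {C\<in>P. z \<in> C}" using Cw by auto
      then have "card (insert Cw ?S) \<le> ?c z" by (rule cnt_ge_sub[OF fP])
      moreover have "card (insert Cw ?S) = card ?S + 1" using Cw fP by simp
      moreover have "card ?S \<ge> M" using key z KAB by auto
      ultimately show ?thesis by linarith
    qed
    have cDA: "?c x \<ge> 2" if x: "x \<in> D \<inter> A" for x
    proof -
      have "x \<noteq> y0" "x \<in> K" using x y0 KAB by auto
      then have "{x,y0} \<in> H" using Kedge y0K by blast
      then obtain Cy where Cy: "Cy \<in> P" "{x,y0} \<subseteq> Cy" using cp_cover[OF P] by blast
      have "Cy \<noteq> D" using Cy yD[OF y0] by auto
      have "{D, Cy} \<subseteq> {C\<in>P. x \<in> C}" using Cy D x by auto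
      then have "card {D, Cy} \<le> ?c x" by (rule cnt_ge_sub[OF fP])
      then show ?thesis using \<open>Cy \<noteq> D\<close> by simp
    qed
    have cw: "?c w \<ge> 1" using cnt_pos[OF P D(1,2)] .
    have sA: "(\<Sum>v\<in>A. ?c v) = (\<Sum>v\<in>A \<inter> D. ?c v) + (\<Sum>v\<in>A - D. ?c v)"
      using sum.Int_Diff[OF fA] by blast
    have s1: "(\<Sum>v\<in>A \<inter> D. ?c v) \<ge> card (A \<inter> D) * 2" by (rule sum_ge) (use cDA in auto)
    have s2: "(\<Sum>v\<in>A - D. ?c v) \<ge> card (A - D) * (M+1)" by (rule sum_ge) (use cR in auto)
    have s3: "(\<Sum>v\<in>B. ?c v) \<ge> card B * M" by (rule sum_ge) (use cB in auto)
    have cAD: "card (A \<inter> D) = M" using M_def by (simp add: Int_commute)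
    have cA: "card A = M + card (A - D)" using card_Int_Diff[OF fA, of D] cAD by simp
    have cK: "card K = card A + card B" using KAB fA fB card_Un_disjoint by metis
    have M2: "M \<ge> 2" using D(3) M_def by simp
    have b1: "card B \<ge> 1" using B_ne fB by (simp add: Suc_le_eq card_gt_0_iff)
    have "card K + 2 * card A \<le> 1 + 2*M + (M+1)*card (A - D) + M * card B"
      using arith_fin[OF M2 b1, of "card (A - D)"] cA cK by (simp add: algebra_simps)
    also have "\<dots> \<le> ?c w + (\<Sum>v\<in>A. ?c v) + (\<Sum>v\<in>B. ?c v)"
      using cw sA s1 s2 s3 cAD by (simp add: algebra_simps)
    finally show ?thesis using dc split by simp
  next
    case False
    then have le1: "card (C \<inter> A) \<le> 1" if "C \<in> P" "w \<in> C" for C using that by fastforce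
    have pairP: "{w,x} \<in> P" if x: "x \<in> A" for x
    proof -
      obtain C where C: "C \<in> P" "{w,x} \<subseteq> C" using cp_cover[OF P Aedge[OF x]] by blast
      have "C \<subseteq> {w,x}"
      proof
        fix z assume z: "z \<in> C"
        show "z \<in> {w,x}"
        proof (cases "z = w")
          case False
          then have "z \<in> A" using Wsub[OF C(1)] C z by auto
          then have "{x,z} \<subseteq> C \<inter> A" using x C z by auto
          then have "card {x,z} \<le> card (C \<inter> A)" using fA by (intro card_mono) auto
          moreover have "card (C \<inter> A) \<le> 1" using le1[OF C(1)] C by auto
          ultimately have "card {x,z} \<le> 1" by linarith
          then show ?thesis by (cases "x = z") auto
        qed simp
      qed
      then show ?thesis using C by auto
    qed
    have cw: "?c w \<ge> card A"
    proof -
      have "(\<lambda>x. {w,x}) ` A \<subseteq> {C\<in>P. w \<in> C}" using pairP by auto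
      then have "card ((\<lambda>x. {w,x}) ` A) \<le> ?c w" by (rule cnt_ge_sub[OF fP])
      then show ?thesis using card_image[OF inj_pair[OF wA(1)]] by simp
    qed
    have cA2: "?c x \<ge> 2" if x: "x \<in> A" for x
    proof -
      have "x \<noteq> y0" "x \<in> K" using x y0 KAB by auto
      then have "{x,y0} \<in> H" using Kedge y0K by blast
      then obtain Cy where Cy: "Cy \<in> P" "{x,y0} \<subseteq> Cy" using cp_cover[OF P] by blast
      have "y0 \<noteq> w" using y0 wA by auto
      then have ne: "Cy \<noteq> {w,x}" using Cy \<open>x \<noteq> y0\<close> by auto
      have "{{w,x}, Cy} \<subseteq> {C\<in>P. x \<in> C}" using Cy pairP[OF x] by auto
      then have "card {{w,x}, Cy} \<le> ?c x" by (rule cnt_ge_sub[OF fP])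
      then show ?thesis using ne by simp
    qed
    have s1: "(\<Sum>v\<in>A. ?c v) \<ge> card A * 2" by (rule sum_ge) (use cA2 in auto)
    have s3: "(\<Sum>v\<in>B. ?c v) \<ge> card B * 1" by (rule sum_ge) (use Kpos KAB in auto)
    have cK: "card K = card A + card B" using KAB fA fB card_Un_disjoint by metis
    show ?thesis using dc split cw s1 s3 cK by linarith
  qed
qed

lemma eq_total: "scp V H + scp V (complement V H) = 3 * card V - 3"
proof -
  obtain P where P: "clique_partition V H P" "scp V H = cost P" using scp_opt[OF g] by blast
  obtain Q where Q: "clique_partition V (complement V H) Q" "scp V (complement V H) = cost Q"
    using scp_opt[OF graph_compl[OF g]] by blast
  have cK: "card K = card A + card B" using KAB fA fB card_Un_disjoint by metis
  have cV: "card V = card K + 1" using VK wK fK by simp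
  show ?thesis using upper lowerP[OF P(1)] lowerQ[OF Q(1)] P(2) Q(2) cK cV by linarith
qed

end

lemma eq_clique:
  assumes g: "graph V H" and ne: "H \<noteq> {}" and na: "H \<noteq> all_pairs V"
    and K: "is_clique V H K" and cK: "card K = card V - 1"
  shows "scp V H + scp V (complement V H) = 3 * card V - 3"
proof -
  have fV: "finite V" using g unfolding graph_def by simp
  have KV: "K \<subseteq> V" using K unfolding is_clique_def by simp
  have "V \<noteq> {}"
  proof -
    obtain e where "e \<in> H" using ne by blast
    then obtain x y where "x \<in> V" using edge_form[OF g] by blast
    then show ?thesis by blast
  qed
  then have "card V \<ge> 1" using fV by (simp add: Suc_le_eq card_gt_0_iff)
  then have "card (V - K) = 1" using card_Diff_subset[OF finite_subset[OF KV fV] KV] cK by simp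
  then obtain w where w: "V - K = {w}" by (rule card_1_singletonE)
  then have VK: "V = insert w K" "w \<notin> K" using KV by auto
  interpret conf V H K w "{x\<in>K. {w,x} \<in> H}" "K - {x\<in>K. {w,x} \<in> H}"
    by (intro conf.intro g ne na K VK(1) VK(2) refl)
  show ?thesis by (rule eq_total)
qed

theorem mainTheorem3:
  fixes V :: "'a set" and E :: "'a set set" and n :: nat
  assumes "graph V E" and "card V = n"
    and "E \<noteq> {}" and "E \<noteq> all_pairs V"
  shows "scp V E + scp V (complement V E) \<ge> 3 * n - 3 \<and>
         (scp V E + scp V (complement V E) = 3 * n - 3 \<longleftrightarrow>
         (\<exists>C. is_clique V E C \<and> card C = n - 1) \<or>
         (\<exists>C. is_clique V (complement V E) C \<and> card C = n - 1))"
proof -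
  note g = assms(1) and ne = assms(3) and na = assms(4)
  have fV: "finite V" using g unfolding graph_def by simp
  have gc: "graph V (complement V E)" using graph_compl[OF g] .
  have cc: "complement V (complement V E) = E" using compl_compl[OF g] .
  have nec: "complement V E \<noteq> {}" using compl_empty[OF g] na by simp
  have nac: "complement V E \<noteq> all_pairs V" using compl_all[OF g] ne by simp
  show ?thesis
  proof (cases "(\<exists>C. is_clique V E C \<and> card C = n - 1) \<or> (\<exists>C. is_clique V (complement V E) C \<and> card C = n - 1)")
    case cl: True
    have "scp V E + scp V (complement V E) = 3 * n - 3"
    proof (cases "\<exists>C. is_clique V E C \<and> card C = n - 1")
      case True
      then obtain C where "is_clique V E C" "card C = card V - 1" using assms(2) by blast
      then show ?thesis using eq_clique[OF g ne na] assms(2) by blast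
    next
      case False
      then obtain C where "is_clique V (complement V E) C" "card C = card V - 1"
        using cl assms(2) by blast
      then have "scp V (complement V E) + scp V (complement V (complement V E)) = 3 * card V - 3"
        using eq_clique[OF gc nec nac] by blast
      then show ?thesis using cc assms(2) by simp
    qed
    then show ?thesis using cl by simp
  next
    case False
    obtain P where P: "clique_partition V E P" "scp V E = cost P" using scp_opt[OF g] by blast
    obtain Q where Q: "clique_partition V (complement V E) Q" "scp V (complement V E) = cost Q"
      using scp_opt[OF gc] by blast
    have "(\<Sum>v\<in>V. cnt P v + cnt Q v) \<ge> 3 * card V - 2"
      using low_bound[OF g ne na P(1) Q(1)] False assms(2) by blast
    moreover have "cost P + cost Q = (\<Sum>v\<in>V. cnt P v + cnt Q v)"
      using double_count[OF fV cp_fin[OF P(1)]] double_count[OF fV cp_fin[OF Q(1)]]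
        cp_sub[OF P(1)] cp_sub[OF Q(1)] by (simp add: sum.distrib)
    moreover have "card V \<ge> 1"
    proof -
      obtain e where "e \<in> E" using ne by blast
      then obtain x y where "x \<in> V" using edge_form[OF g] by blast
      then show ?thesis using fV by (metis One_nat_def Suc_leI card_gt_0_iff empty_iff)
    qed
    ultimately have "scp V E + scp V (complement V E) \<ge> 3 * n - 2" "n \<ge> 1"
      using P(2) Q(2) assms(2) by auto
    then have "scp V E + scp V (complement V E) \<ge> 3 * n - 3"
      "scp V E + scp V (complement V E) \<noteq> 3 * n - 3" by linarith+
    then show ?thesis using False by blast
  qed
qed

end
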